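(* Let $R$, $a$, $t$, $t_i$, $H_i$ and the polynomials $q_{\mu,i}$, $z_{\mu,i}$, $\sigma_{\mu,i}$ be as in the context, let $I=\langle t_1(X_1),\dots,t_r(X_r)\rangle\lhd R[X_1,\dots,X_r]$, and for $\mu\in H_1\times\dots\times H_r$ let $$h_\mu=\prod_{i=1}^r\frac{t_i(X_i)}{q_{\mu,i}(X_i)}\prod_{i=2}^r\sigma_{\mu,i},\qquad I_\mu=\langle q_{\mu,1},z_{\mu,2},\dots,z_{\mu,r}\rangle .$$ Then the annihilator of the ideal $\langle h_\mu+I\rangle$ in $R[X_1,\dots,X_r]/I$ is $(I_\mu+I)/I$.
   Context: $R$ is a finite commutative chain ring (finite commutative local ring whose ideals are totally ordered) with maximal ideal $M=\langle a\rangle$, $a$ of nilpotency index $t$, residue field $\mathbb F_q$; reduction mod $M$ is denoted $r\mapsto \bar r$ and extended coefficientwise to polynomials. $\mathbb F$ is an algebraic closure of $\mathbb F_q$. For $i=1,\dots,r$, $t_i(X_i)\in R[X_i]$ is monic with $\bar t_i$ square-free, and $H_i\subseteq\mathbb F$ is the set of roots of $\bar t_i$. For $\mu=(\mu_1,\dots,\mu_r)\in H_1\times\dots\times H_r$: $p_{\mu,i}$ is the minimal polynomial of $\mu_i$ over $\mathbb F_q$; for $i\ge2$, $w_{\mu,i}$ is the minimal polynomial of $\mu_i$ over $\mathbb F_q(\mu_1,\dots,\mu_{i-1})$ and $\pi_{\mu,i}=p_{\mu,i}/w_{\mu,i}$. $q_{\mu,i}\in R[X_i]$ is the unique monic factor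 of $t_i$ with $\bar q_{\mu,i}=p_{\mu,i}$ (Hensel's lemma). With $R_{i-1}=R[X_1,\dots,X_{i-1}]/\langle q_{\mu,1},z_{\mu,2},\dots,z_{\mu,i-1}\rangle$ (a local ring with residue field $\mathbb F_q(\mu_1,\dots,\mu_{i-1})$), Hensel's lemma gives a factorization $q_{\mu,i}=z_{\mu,i}\sigma_{\mu,i}$ in $R_{i-1}[X_i]$ into monic coprime factors reducing to $w_{\mu,i}$ and $\pi_{\mu,i}$; $z_{\mu,i},\sigma_{\mu,i}$ are regarded as polynomials in $R[X_1,\dots,X_i]$ by replacing the images of $X_j$ in $R_{i-1}$ by $X_j$. *)

theory Defs
  imports "HOL-Library.Poly_Mapping" "HOL-Computational_Algebra.Polynomial"
          "HOL-Computational_Algebra.Squarefree"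
begin

definition is_ideal :: "'a::comm_ring_1 set \<Rightarrow> bool" where
  "is_ideal J \<longleftrightarrow> 0 \<in> J \<and> (\<forall>x\<in>J. \<forall>y\<in>J. x + y \<in> J) \<and> (\<forall>x\<in>J. \<forall>y. y * x \<in> J)"

definition finite_chain_ring :: "'a::comm_ring_1 \<Rightarrow> nat \<Rightarrow> bool" where
  "finite_chain_ring a t \<longleftrightarrow>
     finite (UNIV :: 'a set) \<and>
     (\<forall>J1 J2. is_ideal (J1::'a set) \<and> is_ideal J2 \<longrightarrow> J1 \<subseteq> J2 \<or> J2 \<subseteq> J1) \<and>
     \<comment> \<open>local, with unique maximal ideal \<langle>a\<rangle>\<close>
     range (\<lambda>y. a * y) \<noteq> UNIV \<and>
     (\<forall>J. is_ideal (J::'a set) \<and> J \<noteq> UNIV \<longrightarrow> J \<subseteq> range (\<lambda>y. a * y)) \<and>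
     \<comment> \<open>nilpotency index t\<close>
     1 \<le> t \<and> a ^ t = 0 \<and> a ^ (t - 1) \<noteq> 0"

definition is_ring_hom :: "('a::comm_ring_1 \<Rightarrow> 'b::comm_ring_1) \<Rightarrow> bool" where
  "is_ring_hom f \<longleftrightarrow> f 0 = 0 \<and> f 1 = 1 \<and> (\<forall>x y. f (x + y) = f x + f y) \<and>
                       (\<forall>x y. f (x * y) = f x * f y)"

definition is_subfield :: "'f::field set \<Rightarrow> bool" where
  "is_subfield K \<longleftrightarrow> 0 \<in> K \<and> 1 \<in> K \<and> (\<forall>x\<in>K. \<forall>y\<in>K. x + y \<in> K \<and> x * y \<in> K) \<and>
                     (\<forall>x\<in>K. - x \<in> K \<and> inverse x \<in> K)"

definition gen_subfield :: "'f::field set \<Rightarrow> 'f set" where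
  "gen_subfield S = \<Inter> {K. is_subfield K \<and> S \<subseteq> K}"

definition is_algebraic_closure :: "('k::field \<Rightarrow> 'f::field) \<Rightarrow> bool" where
  "is_algebraic_closure emb \<longleftrightarrow> is_ring_hom emb \<and>
     (\<forall>p :: 'f poly. degree p \<ge> 1 \<longrightarrow> (\<exists>x. poly p x = 0)) \<and>
     (\<forall>x :: 'f. \<exists>p :: 'k poly. p \<noteq> 0 \<and> poly (map_poly emb p) x = 0)"

definition is_minpoly :: "'f::field set \<Rightarrow> 'f \<Rightarrow> 'f poly \<Rightarrow> bool" where
  "is_minpoly K \<alpha> p \<longleftrightarrow> set (coeffs p) \<subseteq> K \<and> lead_coeff p = 1 \<and> poly p \<alpha> = 0 \<and>
     (\<forall>g. set (coeffs g) \<subseteq> K \<and> poly g \<alpha> = 0 \<longrightarrow> p dvd g)"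

type_synonym 'a mpoly = "(nat \<Rightarrow>\<^sub>0 nat) \<Rightarrow>\<^sub>0 'a"

definition Var :: "nat \<Rightarrow> 'a::comm_ring_1 mpoly" where
  "Var i = Poly_Mapping.single (Poly_Mapping.single i 1) 1"

definition Const :: "'a::comm_ring_1 \<Rightarrow> 'a mpoly" where
  "Const c = Poly_Mapping.single 0 c"

text \<open>Univariate polynomial p regarded as the polynomial p(X_i).\<close>
definition in_var :: "nat \<Rightarrow> 'a::comm_ring_1 poly \<Rightarrow> 'a mpoly" where
  "in_var i p = poly (map_poly Const p) (Var i)"

definition vars :: "'a::zero mpoly \<Rightarrow> nat set" where
  "vars f = \<Union> (Poly_Mapping.keys ` Poly_Mapping.keys f)"

definition polys_in :: "nat set \<Rightarrow> 'a::zero mpoly set" where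
  "polys_in V = {f. vars f \<subseteq> V}"

definition ideal_gen :: "nat set \<Rightarrow> 'a::comm_ring_1 mpoly set \<Rightarrow> 'a mpoly set" where
  "ideal_gen V G = {f. \<exists>c. (\<forall>g\<in>G. c g \<in> polys_in V) \<and> f = (\<Sum>g\<in>G. c g * g)}"

definition monic_in :: "nat \<Rightarrow> 'a::comm_ring_1 mpoly \<Rightarrow> bool" where
  "monic_in i f \<longleftrightarrow> (\<exists>d g. f = Var i ^ d + g \<and>
      (\<forall>m\<in>Poly_Mapping.keys g. Poly_Mapping.lookup m i < d))"

definition mmap :: "('a::zero \<Rightarrow> 'b::zero) \<Rightarrow> 'a mpoly \<Rightarrow> 'b mpoly" where
  "mmap f p = Poly_Mapping.map f p"

text \<open>Substitute X_j := v j for all j \<noteq> i, keeping X_i as the variable of a univariate polynomial.\<close>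
definition eval_except :: "nat \<Rightarrow> (nat \<Rightarrow> 'f::field) \<Rightarrow> 'f mpoly \<Rightarrow> 'f poly" where
  "eval_except i v f = (\<Sum>m\<in>Poly_Mapping.keys f.
      smult (Poly_Mapping.lookup f m *
             (\<Prod>j\<in>Poly_Mapping.keys m - {i}. v j ^ Poly_Mapping.lookup m j))
            (monom 1 (Poly_Mapping.lookup m i)))"

end

theory Submission
  imports Defs
begin


lemma hom_sum: "is_ring_hom f \<Longrightarrow> f (sum g A) = (\<Sum>x\<in>A. f (g x))"
  unfolding is_ring_hom_def
  by (induction A rule: infinite_finite_induct) auto

lemma map_poly_hom_add: "is_ring_hom f \<Longrightarrow> map_poly f (p + q) = map_poly f p + map_poly f q"
  by (rule poly_eqI) (simp add: coeff_map_poly is_ring_hom_def)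

lemma map_poly_hom_mult: "is_ring_hom f \<Longrightarrow> map_poly f (p * q) = map_poly f p * map_poly f q"
proof -
  assume h: "is_ring_hom f"
  then have f0: "f 0 = 0" and fm: "\<And>x y. f (x * y) = f x * f y" by (auto simp: is_ring_hom_def)
  show ?thesis
    by (rule poly_eqI) (simp add: coeff_map_poly f0 coeff_mult hom_sum[OF h] fm)
qed

lemma field_bezout_gen:
  fixes b :: "'k::field poly"
  shows "\<exists>x y d. x * a + y * b = d \<and> d dvd a \<and> d dvd b"
proof (induction "if b = 0 then 0 else Suc (degree b)" arbitrary: a b rule: less_induct)
  case less
  show ?case
  proof (cases "b = 0")
    case True
    then show ?thesis by (rule_tac x=1 in exI, rule_tac x=0 in exI, rule_tac x=a in exI) auto
  next
    case False
    have lt: "(if a mod b = 0 then 0 else Suc (degree (a mod b))) < (if b = 0 then 0 else Suc (degree b))"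
      using False degree_mod_less[OF False, of a] by auto
    obtain x y d where xy: "x * b + y * (a mod b) = d" "d dvd b" "d dvd (a mod b)"
      using less[OF lt] by blast
    have am: "a = (a div b) * b + a mod b" by simp
    have "d dvd (a div b) * b" using xy(2) by (rule dvd_mult)
    then have "d dvd (a div b) * b + a mod b" using xy(3) by (rule dvd_add)
    then have "d dvd a" using am by simp
    moreover have "y * a + (x - y * (a div b)) * b = x * b + y * (a - (a div b) * b)"
      by (simp add: algebra_simps)
    moreover have "a - (a div b) * b = a mod b" by (simp add: minus_div_mult_eq_mod)
    ultimately have "d dvd a \<and> y * a + (x - y * (a div b)) * b = d" using xy(1) by simp
    then show ?thesis using xy(2) by blast
  qed
qed

lemma field_bezout:
  fixes a b :: "'k::field poly"
  assumes "coprime a b" shows "\<exists>x y. x * a + y * b = 1"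
proof -
  obtain x y d where xy: "x * a + y * b = d" "d dvd a" "d dvd b"
    using field_bezout_gen by blast
  then have "is_unit d" using assms coprime_common_divisor by blast
  then obtain e where "1 = d * e" by (auto elim: dvdE)
  then have "(e * x) * a + (e * y) * b = 1" using xy(1)
    by (metis distrib_left mult.assoc mult.commute)
  then show ?thesis by blast
qed

lemma map_poly_hom_one: "is_ring_hom f \<Longrightarrow> map_poly f 1 = 1"
  by (simp add: is_ring_hom_def)

lemma map_poly_hom_diff: "is_ring_hom f \<Longrightarrow> map_poly f (p - q) = map_poly f p - map_poly f q"
proof -
  assume h: "is_ring_hom f"
  have "map_poly f (p - q) + map_poly f q = map_poly f p"
    using map_poly_hom_add[OF h, of "p - q" q] by simp
  then show ?thesis by (simp add: eq_diff_eq)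
qed

lemma sqfree_coprime:
  fixes a b :: "'k::field poly"
  assumes "squarefree (a * b)" shows "coprime a b"
proof (rule coprimeI)
  fix c assume "c dvd a" "c dvd b"
  then have "c ^ 2 dvd a * b" by (simp add: power2_eq_square mult_dvd_mono)
  then show "is_unit c" using assms squarefreeD by blast
qed

lemma univ_bezout:
  fixes a :: "'a::comm_ring_1" and red :: "'a \<Rightarrow> 'k::field" and q s tp :: "'a poly"
  assumes red_hom: "is_ring_hom red" and red_surj: "surj red"
    and red_ker: "{x. red x = 0} = range (\<lambda>y. a * y)"
    and nil: "a ^ nt = 0"
    and sq: "squarefree (map_poly red tp)" and fac: "tp = q * s"
  shows "\<exists>U W. U * s + W * q = 1"
proof -
  have r0: "red 0 = 0" using red_hom by (simp add: is_ring_hom_def)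
  have "coprime (map_poly red q) (map_poly red s)"
    using sq fac map_poly_hom_mult[OF red_hom] sqfree_coprime by metis
  then obtain A' B' where bz: "A' * map_poly red q + B' * map_poly red s = 1"
    using field_bezout by blast
  define L where "L = (\<lambda>c. if c = 0 then 0 else (SOME x. red x = c))"
  have L0: "L 0 = 0" by (simp add: L_def)
  have RL: "red (L c) = c" for c
  proof (cases "c = 0")
    case True then show ?thesis using r0 by (simp add: L_def)
  next
    case False
    obtain x where x: "red x = c" using red_surj by (metis surjD)
    show ?thesis using False someI[of "\<lambda>x. red x = c" x, OF x] by (simp add: L_def)
  qed
  have lift: "map_poly red (map_poly L P) = P" for P
    by (simp add: map_poly_map_poly L0 r0 o_def RL)
  define A where "A = map_poly L A'"
  define B where "B = map_poly L B'"
  define E where "E = A * q + B * s - 1"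
  have redE: "map_poly red E = 0"
    unfolding E_def
    by (simp add: map_poly_hom_diff[OF red_hom] map_poly_hom_add[OF red_hom]
        map_poly_hom_mult[OF red_hom] map_poly_hom_one[OF red_hom] A_def B_def lift bz)
  have ck: "coeff E n \<in> range (\<lambda>y. a * y)" for n
  proof -
    have "red (coeff E n) = 0"
      using arg_cong[OF redE, of "\<lambda>P. coeff P n"] by (simp add: coeff_map_poly r0)
    then show ?thesis using red_ker by blast
  qed
  define D where "D = (\<lambda>c. if c = 0 then 0 else (SOME y. c = a * y))"
  define C where "C = map_poly D E"
  have "E = smult a C"
  proof (rule poly_eqI)
    fix n
    obtain y where y: "coeff E n = a * y" using ck[of n] by blast
    have "coeff E n = a * D (coeff E n)"
    proof (cases "coeff E n = 0")
      case True then show ?thesis by (simp add: D_def)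
    next
      case False then show ?thesis
        using someI[of "\<lambda>y. coeff E n = a * y" y, OF y] by (simp add: D_def)
    qed
    then show "coeff E n = coeff (smult a C) n" by (simp add: C_def coeff_map_poly D_def)
  qed
  then have En: "E ^ nt = 0" by (simp add: smult_power nil)
  have "(1 - (- E)) * (\<Sum>i<nt. (- E) ^ i) = 1 - (- E) ^ nt"
    by (simp add: one_diff_power_eq)
  also have "\<dots> = 1" using En by (simp add: power_minus')
  finally have "(1 + E) * (\<Sum>i<nt. (- E) ^ i) = 1" by simp
  moreover have "1 + E = A * q + B * s" by (simp add: E_def)
  ultimately have "(A * q + B * s) * (\<Sum>i<nt. (- E) ^ i) = 1" by simp
  then have "(\<Sum>i<nt. (- E) ^ i) * B * s + (\<Sum>i<nt. (- E) ^ i) * A * q = 1"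
    by (simp add: algebra_simps)
  then show ?thesis by blast
qed



lemma Const_hom: "is_ring_hom (Const :: 'a::comm_ring_1 \<Rightarrow> 'a mpoly)"
  unfolding is_ring_hom_def Const_def
  by (simp add: single_add mult_single)

lemma in_var_mult: "in_var i (p * q) = in_var i p * in_var i q"
  unfolding in_var_def by (simp add: map_poly_hom_mult[OF Const_hom])

lemma in_var_add: "in_var i (p + q) = in_var i p + in_var i q"
  unfolding in_var_def by (simp add: map_poly_hom_add[OF Const_hom])

lemma in_var_one: "in_var i 1 = 1"
  unfolding in_var_def by (simp add: map_poly_hom_one[OF Const_hom])

lemma vars_add: "vars (f + g) \<subseteq> vars f \<union> vars g"
proof
  fix j assume "j \<in> vars (f + g)"
  then obtain m where m: "m \<in> Poly_Mapping.keys (f + g)" "j \<in> Poly_Mapping.keys m"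
    unfolding vars_def by blast
  then have "m \<in> Poly_Mapping.keys f \<or> m \<in> Poly_Mapping.keys g" using keys_add[of f g] by blast
  then show "j \<in> vars f \<union> vars g" using m(2) unfolding vars_def by blast
qed

lemma vars_mult: "vars ((f::'a::comm_ring_1 mpoly) * g) \<subseteq> vars f \<union> vars g"
proof
  fix j assume "j \<in> vars (f * g)"
  then obtain m where m: "m \<in> Poly_Mapping.keys (f * g)" "j \<in> Poly_Mapping.keys m"
    unfolding vars_def by blast
  have "m \<in> {a + b |a b. a \<in> Poly_Mapping.keys f \<and> b \<in> Poly_Mapping.keys g}"
    using m(1) keys_mult[of f g] by (rule subsetD[rotated])
  then obtain a b where ab: "m = a + b" "a \<in> Poly_Mapping.keys f" "b \<in> Poly_Mapping.keys g"
    by blast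
  have "j \<in> Poly_Mapping.keys (a + b)" using m(2) ab(1) by simp
  then have "j \<in> Poly_Mapping.keys a \<or> j \<in> Poly_Mapping.keys b" using keys_add[of a b] by blast
  then show "j \<in> vars f \<union> vars g" using ab unfolding vars_def by blast
qed

lemma vars_Const: "vars (Const c) = {}"
  unfolding vars_def Const_def by simp

lemma vars_Var: "vars (Var i :: 'a::comm_ring_1 mpoly) \<subseteq> {i}"
  unfolding vars_def Var_def by simp

lemma Const_neg1: "Const (-1) = (-1 :: 'a::comm_ring_1 mpoly)"
  unfolding Const_def by (simp add: single_uminus)

lemma vars_uminus: "vars (- (f::'a::comm_ring_1 mpoly)) \<subseteq> vars f"
proof -
  have "- f = Const (-1) * f" by (simp add: Const_neg1)
  then show ?thesis using vars_mult[of "Const (-1)" f] vars_Const by auto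
qed

lemma polys_add: "f \<in> polys_in V \<Longrightarrow> g \<in> polys_in V \<Longrightarrow> f + g \<in> polys_in V"
  unfolding polys_in_def using vars_add[of f g] by blast

lemma polys_mult: "f \<in> polys_in V \<Longrightarrow> g \<in> polys_in V \<Longrightarrow> (f::'a::comm_ring_1 mpoly) * g \<in> polys_in V"
  unfolding polys_in_def using vars_mult[of f g] by blast

lemma polys_uminus: "f \<in> polys_in V \<Longrightarrow> - (f::'a::comm_ring_1 mpoly) \<in> polys_in V"
  unfolding polys_in_def using vars_uminus[of f] by blast

lemma polys_diff: "f \<in> polys_in V \<Longrightarrow> g \<in> polys_in V \<Longrightarrow> (f::'a::comm_ring_1 mpoly) - g \<in> polys_in V"
proof -
  assume a: "f \<in> polys_in V" "g \<in> polys_in V"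
  have "f - g = f + - g" by simp
  then show ?thesis using polys_add[OF a(1) polys_uminus[OF a(2)]] by simp
qed

lemma polys_Const: "Const c \<in> polys_in V"
  unfolding polys_in_def by (simp add: vars_Const)

lemma polys_zero: "0 \<in> polys_in V"
  unfolding polys_in_def vars_def by simp

lemma polys_one: "(1::'a::comm_ring_1 mpoly) \<in> polys_in V"
  using polys_Const[of 1 V] by (simp add: Const_def)

lemma polys_Var: "i \<in> V \<Longrightarrow> (Var i :: 'a::comm_ring_1 mpoly) \<in> polys_in V"
  unfolding polys_in_def using vars_Var[of i] by blast

lemma polys_mono: "V \<subseteq> W \<Longrightarrow> polys_in V \<subseteq> polys_in W"
  unfolding polys_in_def by auto

lemma polys_sum: "(\<And>x. x \<in> A \<Longrightarrow> f x \<in> polys_in V) \<Longrightarrow> sum f A \<in> polys_in V"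
  by (induction A rule: infinite_finite_induct) (auto simp: polys_zero polys_add)

lemma polys_prod: "(\<And>x. x \<in> A \<Longrightarrow> f x \<in> polys_in V) \<Longrightarrow>
    prod f A \<in> polys_in (V :: nat set) \<and> (prod f A :: 'a::comm_ring_1 mpoly) \<in> polys_in V"
  by (induction A rule: infinite_finite_induct) (auto simp: polys_one polys_mult)

lemma polys_in_var: "i \<in> V \<Longrightarrow> (in_var i p :: 'a::comm_ring_1 mpoly) \<in> polys_in V"
proof (induction p rule: pCons_induct)
  case 0 then show ?case by (simp add: in_var_def polys_zero)
next
  case (pCons c p)
  have "in_var i (pCons c p) = Const c + Var i * in_var i p"
    unfolding in_var_def by (simp add: map_poly_pCons Const_def)
  then show ?case using pCons.prems pCons.IH polys_add[OF polys_Const polys_mult[OF polys_Var]] by simp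
qed

lemma ig_zero: "0 \<in> ideal_gen V G"
  unfolding ideal_gen_def by (rule CollectI, rule exI[of _ "\<lambda>_. 0"]) (simp add: polys_zero)

lemma ig_add: "x \<in> ideal_gen V G \<Longrightarrow> y \<in> ideal_gen V G \<Longrightarrow> x + y \<in> ideal_gen V G"
proof -
  assume "x \<in> ideal_gen V G" "y \<in> ideal_gen V G"
  then obtain c d where c: "\<forall>g\<in>G. c g \<in> polys_in V" "x = (\<Sum>g\<in>G. c g * g)"
    and d: "\<forall>g\<in>G. d g \<in> polys_in V" "y = (\<Sum>g\<in>G. d g * g)"
    unfolding ideal_gen_def by blast
  have "x + y = (\<Sum>g\<in>G. (c g + d g) * g)" using c d by (simp add: sum.distrib distrib_right)
  moreover have "\<forall>g\<in>G. c g + d g \<in> polys_in V" using c d polys_add by blast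
  ultimately show ?thesis unfolding ideal_gen_def by (intro CollectI exI[of _ "\<lambda>g. c g + d g"]) simp
qed

lemma ig_mult: "x \<in> ideal_gen V G \<Longrightarrow> p \<in> polys_in V \<Longrightarrow> p * x \<in> ideal_gen V G"
proof -
  assume "x \<in> ideal_gen V G" and p: "p \<in> polys_in V"
  then obtain c where c: "\<forall>g\<in>G. c g \<in> polys_in V" "x = (\<Sum>g\<in>G. c g * g)"
    unfolding ideal_gen_def by blast
  have "p * x = (\<Sum>g\<in>G. (p * c g) * g)" using c by (simp add: sum_distrib_left mult.assoc)
  moreover have "\<forall>g\<in>G. p * c g \<in> polys_in V" using c p polys_mult by blast
  ultimately show ?thesis unfolding ideal_gen_def by (intro CollectI exI[of _ "\<lambda>g. p * c g"]) simp
qed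

lemma ig_mult': "x \<in> ideal_gen V G \<Longrightarrow> p \<in> polys_in V \<Longrightarrow> x * p \<in> ideal_gen V G"
  using ig_mult by (metis mult.commute)

lemma ig_uminus:
  fixes x :: "'a::comm_ring_1 mpoly"
  shows "x \<in> ideal_gen V G \<Longrightarrow> - x \<in> ideal_gen V G"
proof -
  assume x: "x \<in> ideal_gen V G"
  have m: "(-1 :: 'a mpoly) \<in> polys_in V" by (rule polys_uminus[OF polys_one])
  have "-x = (-1) * x" by simp
  then show ?thesis using ig_mult[OF x m] by simp
qed

lemma ig_diff: "x \<in> ideal_gen V G \<Longrightarrow> y \<in> ideal_gen V G \<Longrightarrow> x - y \<in> ideal_gen V G"
  using ig_add ig_uminus by (metis diff_conv_add_uminus)

lemma ig_gen: "finite G \<Longrightarrow> g \<in> G \<Longrightarrow> g \<in> ideal_gen V G"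
proof -
  assume fin: "finite G" and g: "g \<in> G"
  have "(\<Sum>h\<in>G. (if h = g then 1 else 0) * h) = (\<Sum>h\<in>G. if h = g then h else 0)"
    by (rule sum.cong) auto
  also have "\<dots> = g" using fin g by simp
  finally show ?thesis unfolding ideal_gen_def
    by (intro CollectI exI[of _ "\<lambda>h. if h = g then 1 else 0"]) (auto simp: polys_one polys_zero)
qed

lemma ig_Vmono: "V \<subseteq> W \<Longrightarrow> ideal_gen V G \<subseteq> ideal_gen W G"
  unfolding ideal_gen_def using polys_mono by blast

lemma ig_sum: "(\<And>x. x \<in> A \<Longrightarrow> f x \<in> ideal_gen V G) \<Longrightarrow> sum f A \<in> ideal_gen V G"
  by (induction A rule: infinite_finite_induct) (auto simp: ig_zero ig_add)

lemma ig_sub: "G \<subseteq> ideal_gen V H \<Longrightarrow> ideal_gen V G \<subseteq> ideal_gen V H"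
proof
  fix x assume G: "G \<subseteq> ideal_gen V H" and "x \<in> ideal_gen V G"
  then obtain c where c: "\<forall>g\<in>G. c g \<in> polys_in V" "x = (\<Sum>g\<in>G. c g * g)"
    unfolding ideal_gen_def by blast
  show "x \<in> ideal_gen V H" unfolding c(2)
    by (rule ig_sum) (use c(1) G in \<open>auto intro: ig_mult\<close>)
qed

lemma ig_mono: "G \<subseteq> H \<Longrightarrow> finite H \<Longrightarrow> ideal_gen V G \<subseteq> ideal_gen V H"
  by (rule ig_sub) (use ig_gen in blast)

lemma ig_polys: "G \<subseteq> polys_in V \<Longrightarrow> ideal_gen V G \<subseteq> polys_in V"
proof
  fix x assume G: "G \<subseteq> polys_in V" and "x \<in> ideal_gen V G"
  then obtain c where c: "\<forall>g\<in>G. c g \<in> polys_in V" "x = (\<Sum>g\<in>G. c g * g)"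
    unfolding ideal_gen_def by blast
  show "x \<in> polys_in V" unfolding c(2)
    by (rule polys_sum) (use c(1) G in \<open>auto intro: polys_mult\<close>)
qed

lemma ann_ext:
  assumes "\<forall>g\<in>G. g * h \<in> ideal_gen V T" "f \<in> ideal_gen V G"
  shows "f * h \<in> ideal_gen V T"
proof -
  obtain c where c: "\<forall>g\<in>G. c g \<in> polys_in V" "f = (\<Sum>g\<in>G. c g * g)"
    using assms(2) unfolding ideal_gen_def by blast
  have "f * h = (\<Sum>g\<in>G. c g * (g * h))" using c by (simp add: sum_distrib_right mult.assoc)
  also have "\<dots> \<in> ideal_gen V T"
    by (rule ig_sum) (simp add: c(1) assms(1) ig_mult)
  finally show ?thesis .
qed

lemma unit_mult:
  assumes "x * x' - 1 \<in> ideal_gen V G" "y * y' - 1 \<in> ideal_gen V G"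
    "x' \<in> polys_in V" "y \<in> polys_in V" "y' \<in> polys_in V"
  shows "(x * y) * (x' * y') - 1 \<in> ideal_gen V G"
proof -
  have "(x * y) * (x' * y') - 1 = (x * x' - 1) * (y * y') + (y * y' - 1)"
    by (simp add: algebra_simps)
  then show ?thesis using ig_add[OF ig_mult'[OF assms(1) polys_mult[OF assms(4,5)]] assms(2)] by (simp only:)
qed

lemma unit_prod:
  fixes f :: "'i \<Rightarrow> 'a::comm_ring_1 mpoly"
  assumes "\<And>i. i \<in> A \<Longrightarrow> f i \<in> polys_in V \<and> (\<exists>y\<in>polys_in V. f i * y - 1 \<in> ideal_gen V G)"
  shows "\<exists>y\<in>polys_in V. prod f A * y - 1 \<in> ideal_gen V G"
  using assms
proof (induction A rule: infinite_finite_induct)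
  case (infinite A)
  have "prod f A * 1 - 1 \<in> ideal_gen V G" using infinite(1) ig_zero by simp
  then show ?case using polys_one by blast
next
  case empty
  have "prod f {} * 1 - 1 \<in> ideal_gen V G" using ig_zero by simp
  then show ?case using polys_one by blast
next
  case (insert i A)
  have IH: "\<exists>y\<in>polys_in V. prod f A * y - 1 \<in> ideal_gen V G"
    using insert.IH insert.prems by simp
  obtain y where y: "y \<in> polys_in V" "prod f A * y - 1 \<in> ideal_gen V G" using IH by blast
  have fi: "f i \<in> polys_in V \<and> (\<exists>y\<in>polys_in V. f i * y - 1 \<in> ideal_gen V G)"
    using insert.prems by simp
  obtain y' where y': "y' \<in> polys_in V" "f i * y' - 1 \<in> ideal_gen V G" using fi by blast
  have pA: "prod f A \<in> polys_in V" using polys_prod[of A f V] insert.prems by simp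
  have "(f i * prod f A) * (y' * y) - 1 \<in> ideal_gen V G"
    by (rule unit_mult[OF y'(2) y(2) y'(1) pA y(1)])
  moreover have "prod f (insert i A) = f i * prod f A" using insert(1,2) by simp
  ultimately show ?case using polys_mult[OF y'(1) y(1)] by auto
qed



theorem mainTheorem2:
  fixes a :: "'a::comm_ring_1" and nt :: nat
    and red :: "'a \<Rightarrow> 'k::field" and emb :: "'k \<Rightarrow> 'f::field"
    and r :: nat and tp :: "nat \<Rightarrow> 'a poly" and \<mu> :: "nat \<Rightarrow> 'f"
    and p w :: "nat \<Rightarrow> 'f poly" and q s :: "nat \<Rightarrow> 'a poly"
    and z \<sigma> :: "nat \<Rightarrow> 'a mpoly"
  assumes chain: "finite_chain_ring a nt"
    and red_hom: "is_ring_hom red" and red_surj: "surj red"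
    and red_ker: "{x. red x = 0} = range (\<lambda>y. a * y)"
    and closure: "is_algebraic_closure emb"
    and r_pos: "1 \<le> r"
    and tp_monic: "\<forall>i\<in>{1..r}. lead_coeff (tp i) = 1"
    and tp_sqfree: "\<forall>i\<in>{1..r}. squarefree (map_poly red (tp i))"
    and mu_H: "\<forall>i\<in>{1..r}. \<mu> i \<in> {x. poly (map_poly emb (map_poly red (tp i))) x = 0}"
    and p_min: "\<forall>i\<in>{1..r}. is_minpoly (range emb) (\<mu> i) (p i)"
    and w_min: "\<forall>i\<in>{2..r}. is_minpoly (gen_subfield (range emb \<union> \<mu> ` {1..<i})) (\<mu> i) (w i)"
    and q_monic: "\<forall>i\<in>{1..r}. lead_coeff (q i) = 1"
    and q_factor: "\<forall>i\<in>{1..r}. tp i = q i * s i"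
    and q_red: "\<forall>i\<in>{1..r}. map_poly emb (map_poly red (q i)) = p i"
    and z_in: "\<forall>i\<in>{2..r}. z i \<in> polys_in {1..i} \<and> \<sigma> i \<in> polys_in {1..i}"
    and z_monic: "\<forall>i\<in>{2..r}. \<exists>z'. z' \<in> polys_in {1..i} \<and> monic_in i z' \<and>
        z i - z' \<in> ideal_gen {1..i} ({in_var 1 (q 1)} \<union> z ` {2..<i})"
    and \<sigma>_monic: "\<forall>i\<in>{2..r}. \<exists>s'. s' \<in> polys_in {1..i} \<and> monic_in i s' \<and>
        \<sigma> i - s' \<in> ideal_gen {1..i} ({in_var 1 (q 1)} \<union> z ` {2..<i})"
    and z_fact: "\<forall>i\<in>{2..r}.
        in_var i (q i) - z i * \<sigma> i \<in> ideal_gen {1..i} ({in_var 1 (q 1)} \<union> z ` {2..<i})"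
    and z_coprime: "\<forall>i\<in>{2..r}. \<exists>u\<in>polys_in {1..i}. \<exists>v\<in>polys_in {1..i}.
        u * z i + v * \<sigma> i - 1 \<in> ideal_gen {1..i} ({in_var 1 (q 1)} \<union> z ` {2..<i})"
    and z_red: "\<forall>i\<in>{2..r}. eval_except i \<mu> (mmap (emb \<circ> red) (z i)) = w i"
    and \<sigma>_red: "\<forall>i\<in>{2..r}. eval_except i \<mu> (mmap (emb \<circ> red) (\<sigma> i)) = p i div w i"
  shows "{f \<in> polys_in {1..r}.
            f * ((\<Prod>i\<in>{1..r}. in_var i (s i)) * (\<Prod>i\<in>{2..r}. \<sigma> i))
              \<in> ideal_gen {1..r} ((\<lambda>i. in_var i (tp i)) ` {1..r})}
         = ideal_gen {1..r} (({in_var 1 (q 1)} \<union> z ` {2..r}) \<union> (\<lambda>i. in_var i (tp i)) ` {1..r})"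
proof -
  define T where "T = (\<lambda>i. in_var i (tp i)) ` {1..r}"
  define Q where "Q = (\<lambda>k. {in_var 1 (q 1)} \<union> z ` {2..<k})"
  define G where "G = ({in_var 1 (q 1)} \<union> z ` {2..r}) \<union> T"
  define gk where "gk = (\<lambda>k. (\<Prod>i\<in>{1..k}. in_var i (s i)) * (\<Prod>i\<in>{2..k}. \<sigma> i))"
  define I where "I = ideal_gen {1..r} T"
  define J where "J = ideal_gen {1..r} G"
  have finT: "finite T" unfolding T_def by simp
  have finG: "finite G" unfolding G_def using finT by simp
  have TG: "T \<subseteq> G" unfolding G_def by blast
  have QG: "Q k \<subseteq> G" if "k \<le> Suc r" for k
    unfolding Q_def G_def using that by auto
  have IJ: "I \<subseteq> J" unfolding I_def J_def by (rule ig_mono[OF TG finG])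
  have zpol: "z i \<in> polys_in {1..r}" "\<sigma> i \<in> polys_in {1..r}" if "i \<in> {2..r}" for i
    using z_in that polys_mono[of "{1..i}" "{1..r}"] by auto
  have hypV: "x \<in> ideal_gen {1..r} (Q i)" if "i \<in> {2..r}" "x \<in> ideal_gen {1..i} (Q i)" for i x
    using that ig_Vmono[of "{1..i}" "{1..r}" "Q i"] by auto
  have hypJ: "x \<in> J" if "i \<in> {2..r}" "x \<in> ideal_gen {1..i} (Q i)" for i x
  proof -
    have "x \<in> ideal_gen {1..r} (Q i)" using hypV that by blast
    moreover have "Q i \<subseteq> G" using QG that by simp
    ultimately show ?thesis unfolding J_def using ig_mono[OF _ finG] by blast
  qed
  have varpol: "in_var i p \<in> polys_in {1..r}" if "i \<in> {1..r}" for i and p :: "'a poly"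
    using polys_in_var that by blast
  have Gpol: "G \<subseteq> polys_in {1..r}"
    unfolding G_def T_def using varpol zpol varpol[of 1] r_pos by auto
  have Tin: "in_var i (tp i) \<in> I" if "i \<in> {1..r}" for i
    unfolding I_def by (rule ig_gen[OF finT]) (use that T_def in auto)
  have GJ: "g \<in> J" if "g \<in> G" for g unfolding J_def using ig_gen[OF finG that] .
  have qJ: "in_var i (q i) \<in> J" if i: "i \<in> {1..r}" for i
  proof (cases "i = 1")
    case True then show ?thesis using GJ G_def by auto
  next
    case False
    then have i2: "i \<in> {2..r}" using i by auto
    have e: "in_var i (q i) - z i * \<sigma> i \<in> J" using hypJ[OF i2] z_fact i2 Q_def by auto
    have "z i \<in> J" using GJ G_def i2 by auto
    then have "z i * \<sigma> i \<in> J" unfolding J_def using ig_mult' zpol(2)[OF i2] by blast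
    then have "(in_var i (q i) - z i * \<sigma> i) + z i * \<sigma> i \<in> J" unfolding J_def
      using e ig_add unfolding J_def by blast
    then show ?thesis by simp
  qed
  have nil: "a ^ nt = 0" using chain unfolding finite_chain_ring_def by blast
  have sunit: "in_var i (s i) \<in> polys_in {1..r} \<and> (\<exists>y\<in>polys_in {1..r}. in_var i (s i) * y - 1 \<in> J)"
    if i: "i \<in> {1..r}" for i
  proof -
    obtain U W where UW: "U * s i + W * q i = 1"
      using univ_bezout[OF red_hom red_surj red_ker nil, of "tp i" "q i" "s i"] tp_sqfree q_factor i
      by blast
    have "in_var i U * in_var i (s i) + in_var i W * in_var i (q i) = 1"
      using arg_cong[OF UW, of "in_var i"] by (simp add: in_var_add in_var_mult in_var_one)
    then have eq: "in_var i (s i) * in_var i U - 1 = - (in_var i W * in_var i (q i))"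
      by (simp add: algebra_simps eq_diff_eq)
    have "in_var i W * in_var i (q i) \<in> J" unfolding J_def
      using ig_mult[OF qJ[OF i, unfolded J_def] varpol[OF i]] .
    then have "in_var i (s i) * in_var i U - 1 \<in> J" unfolding eq J_def by (rule ig_uminus)
    then show ?thesis using varpol[OF i] by blast
  qed
  have sigunit: "\<sigma> i \<in> polys_in {1..r} \<and> (\<exists>y\<in>polys_in {1..r}. \<sigma> i * y - 1 \<in> J)"
    if i: "i \<in> {2..r}" for i
  proof -
    obtain u v where uv: "u \<in> polys_in {1..i}" "v \<in> polys_in {1..i}"
      "u * z i + v * \<sigma> i - 1 \<in> ideal_gen {1..i} ({in_var 1 (q 1)} \<union> z ` {2..<i})"
      using z_coprime i by blast
    have e: "u * z i + v * \<sigma> i - 1 \<in> J" using hypJ[OF i] uv(3) Q_def by auto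
    have upol: "u \<in> polys_in {1..r}" "v \<in> polys_in {1..r}"
      using uv(1,2) polys_mono[of "{1..i}" "{1..r}"] i by auto
    have "z i \<in> J" using GJ G_def i by auto
    then have "u * z i \<in> J" unfolding J_def using ig_mult upol(1) by blast
    then have "(u * z i + v * \<sigma> i - 1) - u * z i \<in> J" using e ig_diff unfolding J_def by blast
    moreover have "(u * z i + v * \<sigma> i - 1) - u * z i = \<sigma> i * v - 1" by (simp add: algebra_simps)
    ultimately show ?thesis using upol(2) zpol(2)[OF i] by auto
  qed
  have gkpol: "gk k \<in> polys_in {1..r}" if "k \<le> r" for k
  proof -
    have "(\<Prod>i\<in>{1..k}. in_var i (s i)) \<in> polys_in {1..r}"
      using polys_prod[of "{1..k}" "\<lambda>i. in_var i (s i)" "{1..r}"] varpol that by auto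
    moreover have "(\<Prod>i\<in>{2..k}. \<sigma> i) \<in> polys_in {1..r}"
      using polys_prod[of "{2..k}" \<sigma> "{1..r}"] zpol(2) that by auto
    ultimately show ?thesis unfolding gk_def using polys_mult by blast
  qed
  have hunit: "\<exists>y\<in>polys_in {1..r}. gk r * y - 1 \<in> J"
  proof -
    obtain y1 where y1: "y1 \<in> polys_in {1..r}" "(\<Prod>i\<in>{1..r}. in_var i (s i)) * y1 - 1 \<in> J"
      using unit_prod[of "{1..r}" "\<lambda>i. in_var i (s i)" "{1..r}" G] sunit unfolding J_def by blast
    obtain y2 where y2: "y2 \<in> polys_in {1..r}" "(\<Prod>i\<in>{2..r}. \<sigma> i) * y2 - 1 \<in> J"
      using unit_prod[of "{2..r}" \<sigma> "{1..r}" G] sigunit unfolding J_def by blast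
    have p2: "(\<Prod>i\<in>{2..r}. \<sigma> i) \<in> polys_in {1..r}"
      using polys_prod[of "{2..r}" \<sigma> "{1..r}"] zpol(2) by auto
    have "gk r * (y1 * y2) - 1 \<in> J" unfolding gk_def J_def
      by (rule unit_mult[OF y1(2)[unfolded J_def] y2(2)[unfolded J_def] y1(1) p2 y2(1)])
    then show ?thesis using polys_mult[OF y1(1) y2(1)] by blast
  qed
  have claim: "1 \<le> k \<longrightarrow> k \<le> r \<longrightarrow> (\<forall>g\<in>Q (Suc k). g * gk k \<in> I)" for k
  proof (induction k)
    case 0 then show ?case by simp
  next
    case (Suc k)
    show ?case
    proof (intro impI)
      assume k1: "1 \<le> Suc k" and kr: "Suc k \<le> r"
      show "\<forall>g\<in>Q (Suc (Suc k)). g * gk (Suc k) \<in> I"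
      proof (cases "k = 0")
        case True
        have Q2: "Q (Suc (Suc k)) = {in_var 1 (q 1)}" using True by (simp add: Q_def)
        have g1: "gk (Suc k) = in_var 1 (s 1)" using True by (simp add: gk_def)
        have "in_var 1 (q 1) * in_var 1 (s 1) = in_var 1 (tp 1)"
          using q_factor r_pos by (simp add: in_var_mult)
        then show ?thesis using Q2 g1 Tin r_pos by simp
      next
        case False
        define m where "m = Suc k"
        have k1': "1 \<le> k" using False by simp
        have m2: "m \<in> {2..r}" using k1' kr m_def by simp
        have IH: "\<forall>g\<in>Q m. g * gk k \<in> I" using Suc.IH k1' kr m_def by simp
        have gkm: "gk m = gk k * (in_var m (s m) * \<sigma> m)"
        proof -
          have a1: "{1..m} = insert m {1..k}" "{2..m} = insert m {2..k}" using m_def k1' by auto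
          show ?thesis unfolding gk_def a1 by (simp add: m_def algebra_simps)
        qed
        have Qm: "Q (Suc m) = insert (z m) (Q m)"
        proof -
          have "{2..<Suc m} = insert m {2..<m}" using m2 by auto
          then show ?thesis unfolding Q_def by auto
        qed
        have gkkpol: "gk k \<in> polys_in {1..r}" using gkpol kr by simp
        have smpol: "in_var m (s m) \<in> polys_in {1..r}" using varpol m2 by simp
        have restpol: "in_var m (s m) * \<sigma> m \<in> polys_in {1..r}"
          using polys_mult[OF smpol zpol(2)[OF m2]] .
        have "g * gk m \<in> I" if g: "g \<in> Q (Suc m)" for g
        proof (cases "g \<in> Q m")
          case True
          have "(g * gk k) * (in_var m (s m) * \<sigma> m) \<in> I"
            using IH True restpol ig_mult' unfolding I_def by blast
          then show ?thesis by (simp add: gkm mult.assoc)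
        next
          case False
          then have gz: "g = z m" using g Qm by auto
          define e where "e = in_var m (q m) - z m * \<sigma> m"
          have eQ: "e \<in> ideal_gen {1..r} (Q m)"
            using hypV[OF m2] z_fact m2 unfolding e_def Q_def by auto
          have eI: "e * gk k \<in> I" using ann_ext[OF IH[unfolded I_def] eQ] unfolding I_def .
          have tI: "in_var m (tp m) * gk k \<in> I"
            using ig_mult'[OF Tin[of m, unfolded I_def] gkkpol] m2 unfolding I_def by auto
          have tp_eq: "in_var m (tp m) = in_var m (q m) * in_var m (s m)"
            using q_factor m2 by (simp add: in_var_mult)
          have "z m * gk m = in_var m (tp m) * gk k - in_var m (s m) * (e * gk k)"
            unfolding gkm tp_eq e_def by (simp add: algebra_simps)
          moreover have "in_var m (s m) * (e * gk k) \<in> I"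
            using ig_mult[OF eI[unfolded I_def] smpol] unfolding I_def .
          ultimately show ?thesis using gz tI ig_diff unfolding I_def by metis
        qed
        then show ?thesis unfolding m_def by blast
      qed
    qed
  qed
  have hdef: "(\<Prod>i\<in>{1..r}. in_var i (s i)) * (\<Prod>i\<in>{2..r}. \<sigma> i) = gk r" by (simp add: gk_def)
  have Qr: "Q (Suc r) \<union> T = G" unfolding Q_def G_def
    using atLeastLessThanSuc_atLeastAtMost by simp
  have annG: "\<forall>g\<in>G. g * gk r \<in> I"
  proof
    fix g assume "g \<in> G"
    then consider "g \<in> Q (Suc r)" | "g \<in> T" using Qr by blast
    then show "g * gk r \<in> I"
    proof cases
      case 1 then show ?thesis using claim[of r] r_pos by blast
    next
      case 2 then show ?thesis using ig_mult'[OF ig_gen[OF finT], of g "gk r" "{1..r}"] gkpol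
        unfolding I_def by auto
    qed
  qed
  show ?thesis
    unfolding hdef T_def[symmetric] G_def[symmetric] I_def[symmetric] J_def[symmetric]
  proof
    show "{f \<in> polys_in {1..r}. f * gk r \<in> I} \<subseteq> J"
    proof
      fix f assume "f \<in> {f \<in> polys_in {1..r}. f * gk r \<in> I}"
      then have f: "f \<in> polys_in {1..r}" "f * gk r \<in> I" by auto
      obtain y where y: "y \<in> polys_in {1..r}" "gk r * y - 1 \<in> J" using hunit by blast
      have "y * (f * gk r) \<in> J" using ig_mult[OF _ y(1)] f(2) IJ unfolding J_def by blast
      moreover have "f * (gk r * y - 1) \<in> J" using ig_mult[OF y(2)[unfolded J_def] f(1)] unfolding J_def .
      moreover have "f = y * (f * gk r) - f * (gk r * y - 1)" by (simp add: algebra_simps)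
      ultimately show "f \<in> J" using ig_diff unfolding J_def by metis
    qed
  next
    show "J \<subseteq> {f \<in> polys_in {1..r}. f * gk r \<in> I}"
    proof
      fix f assume f: "f \<in> J"
      have "f \<in> polys_in {1..r}" using ig_polys[OF Gpol] f unfolding J_def by blast
      moreover have "f * gk r \<in> I" using ann_ext[OF annG[unfolded I_def] f[unfolded J_def]] unfolding I_def .
      ultimately show "f \<in> {f \<in> polys_in {1..r}. f * gk r \<in> I}" by blast
    qed
  qed
qed

end
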